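(* Let $\mathcal{U}=[c,d]\subset\mathbb{R}$ with $c<d$ and $c\neq -d$. Let $A,A'\in GL(n)$ each have $n$ distinct eigenvalues, let $b,b'\in\mathbb{R}^n$, and assume $b^T\eta\neq 0$ for every left eigenvector $\eta\in\mathbb{C}^n$ of $A$. Suppose the systems $x[i+1]=Ax[i]+bu[i]$ and $x[i+1]=A'x[i]+b'u[i]$, both with $x[0]=0$ and $u[i]\in\mathcal{U}$, have identical reachable sets $\mathcal{R}(j,0)$ for all $j\in\mathbb{N}$. Then $(A,b)=(A',b')$.
   Context: For a system $x[i+1]=Ax[i]+bu[i]$, $x[0]=0$, $u[i]\in\mathcal{U}$, the reachable set at time $j$ is $\mathcal{R}(j,0)=\{\phi_u(j;0)\mid u:\mathbb{Z}_{\ge0}\to\mathcal{U}\}$, where $\phi_u(\cdot;0)$ is the trajectory from initial state $0$ under input sequence $u$. $GL(n)$ is the set of invertible real $n\times n$ matrices. A left eigenvector of $A$ is a nonzero $\eta\in\mathbb{C}^n$ with $\eta^TA=\lambda\eta^T$ for some $\lambda\in\mathbb{C}$; $b^T\eta=\sum_j b_j\eta_j$. *)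

theory Defs
  imports "HOL-Analysis.Analysis"
begin

fun traj :: "real^'n^'n \<Rightarrow> real^'n \<Rightarrow> (nat \<Rightarrow> real) \<Rightarrow> nat \<Rightarrow> real^'n" where
  "traj A b u 0 = 0"
| "traj A b u (Suc i) = A *v traj A b u i + u i *\<^sub>R b"

definition reach_set :: "real^'n^'n \<Rightarrow> real^'n \<Rightarrow> real set \<Rightarrow> nat \<Rightarrow> (real^'n) set" where
  "reach_set A b U j = {traj A b u j | u. \<forall>i. u i \<in> U}"

definition cmat :: "real^'n^'m \<Rightarrow> complex^'n^'m" where
  "cmat A = (\<chi> i j. complex_of_real (A $ i $ j))"

definition cvec :: "real^'n \<Rightarrow> complex^'n" where
  "cvec b = (\<chi> i. complex_of_real (b $ i))"

definition eigenvalues :: "real^'n^'n \<Rightarrow> complex set" where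
  "eigenvalues A = {l. \<exists>v :: complex^'n. v \<noteq> 0 \<and> cmat A *v v = l *s v}"

definition left_eigenvector :: "real^'n^'n \<Rightarrow> complex^'n \<Rightarrow> bool" where
  "left_eigenvector A \<eta> \<longleftrightarrow> \<eta> \<noteq> 0 \<and> (\<exists>l. \<eta> v* cmat A = l *s \<eta>)"

end

theory Submission
  imports Defs "HOL-Computational_Algebra.Fundamental_Theorem_Algebra"
begin

lemma span_index:
  fixes G :: "nat \<Rightarrow> 'a::field^'n"
  assumes "finite I"
  shows "y \<in> vec.span (G ` I) \<Longrightarrow> \<exists>c. y = (\<Sum>i\<in>I. c i *s G i)"
  using assms
proof (induction I arbitrary: y rule: finite_induct)
  case empty
  then show ?case by simp
next
  case (insert i I)
  from insert.prems obtain k where k: "y - k *s G i \<in> vec.span (G ` I)"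
    by (auto simp: vec.span_insert)
  from insert.IH[OF k] obtain c where c: "y - k *s G i = (\<Sum>j\<in>I. c j *s G j)" by blast
  have S: "(\<Sum>j\<in>insert i I. (c(i:=k)) j *s G j) = k *s G i + (\<Sum>j\<in>I. c j *s G j)"
    using insert.hyps by (simp add: sum.insert) (rule sum.cong, auto)
  have "y = (y - k *s G i) + k *s G i" by simp
  also have "\<dots> = (\<Sum>j\<in>I. c j *s G j) + k *s G i" using c by simp
  finally have "y = k *s G i + (\<Sum>j\<in>I. c j *s G j)" by (simp add: add.commute)
  then have "y = (\<Sum>j\<in>insert i I. (c(i:=k)) j *s G j)" unfolding S .
  then show ?case by blast
qed

lemma indep_seq:
  fixes F :: "nat \<Rightarrow> 'a::field^'n"
  shows "(\<forall>k\<le>N. F k \<notin> vec.span (F ` {..<k})) \<Longrightarrow> vec.independent (F ` {..N}) \<and> card (F ` {..N}) = Suc N"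
proof (induction N)
  case 0
  then have "F 0 \<noteq> 0" by auto
  then have "vec.independent {F 0}"
    using vec.independent_insertI[of "F 0" "{}"] by simp
  then show ?case by simp
next
  case (Suc N)
  then have IH: "vec.independent (F ` {..N}) \<and> card (F ` {..N}) = Suc N" by auto
  have "F (Suc N) \<notin> vec.span (F ` {..<Suc N})" using Suc.prems by blast
  then have ns: "F (Suc N) \<notin> vec.span (F ` {..N})" by (metis lessThan_Suc_atMost)
  have nm: "F (Suc N) \<notin> F ` {..N}"
  proof
    assume "F (Suc N) \<in> F ` {..N}"
    then have "F (Suc N) \<in> vec.span (F ` {..N})" by (rule vec.span_base)
    with ns show False by contradiction
  qed
  have e: "F ` {..Suc N} = insert (F (Suc N)) (F ` {..N})" by (simp add: atMost_Suc)
  have "vec.independent (insert (F (Suc N)) (F ` {..N}))"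
    using IH ns by (meson vec.independent_insertI)
  moreover have "card (insert (F (Suc N)) (F ` {..N})) = Suc (Suc N)"
    using IH nm by (simp add: card_insert_disjoint)
  ultimately show ?case unfolding e by blast
qed

lemma eig_exists:
  fixes M :: "complex^'n^'n" and W :: "(complex^'n) set"
  assumes sub: "vec.subspace W" and inv: "\<And>x. x \<in> W \<Longrightarrow> M *v x \<in> W"
    and vW: "v \<in> W" and v0: "v \<noteq> 0"
  shows "\<exists>\<eta>\<in>W. \<eta> \<noteq> 0 \<and> (\<exists>l. M *v \<eta> = l *s \<eta>)"
proof -
  define F where "F k = ((\<lambda>x. M *v x) ^^ k) v" for k
  have FW: "F k \<in> W" for k by (induction k) (auto simp: F_def vW inv)
  have FS: "F (Suc k) = M *v F k" for k by (simp add: F_def)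
  have F0: "F 0 = v" by (simp add: F_def)
  have ex: "\<exists>k. F k \<in> vec.span (F ` {..<k})"
  proof (rule ccontr)
    assume "\<not> ?thesis"
    then have "vec.independent (F ` {..CARD('n)}) \<and> card (F ` {..CARD('n)}) = Suc CARD('n)"
      by (intro indep_seq) blast
    then have "Suc CARD('n) \<le> vec.dim (F ` {..CARD('n)})"
      using vec.independent_bound_general[of "F ` {..CARD('n)}"] by simp
    moreover have "vec.dim (F ` {..CARD('n)}) \<le> vec.dim (UNIV :: (complex^'n) set)"
      by (rule vec.dim_subset) simp
    ultimately show False by (simp add: vec_dim_card card_cart_basis)
  qed
  define m where "m = (LEAST k. F k \<in> vec.span (F ` {..<k}))"
  have m: "F m \<in> vec.span (F ` {..<m})" unfolding m_def by (rule LeastI_ex[OF ex])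
  have mmin: "F k \<notin> vec.span (F ` {..<k})" if "k < m" for k
    using that unfolding m_def by (rule not_less_Least)
  have m0: "m \<noteq> 0"
  proof
    assume "m = 0"
    then show False using m F0 v0 by simp
  qed
  obtain a where a: "F m = (\<Sum>i<m. a i *s F i)" using span_index[OF _ m] by auto
  define p :: "complex poly" where "p = monom 1 m - (\<Sum>i<m. monom (a i) i)"
  have cp: "coeff p i = (if i = m then 1 else 0) - (if i < m then a i else 0)" for i
    by (simp add: p_def coeff_sum)
  have dp: "degree p = m"
  proof (rule antisym)
    show "degree p \<le> m" by (rule degree_le) (simp add: cp)
    show "m \<le> degree p" by (rule le_degree) (simp add: cp)
  qed
  then have "\<not> constant (poly p)" using m0 by (simp add: constant_degree)
  then obtain z where z: "poly p z = 0" using fundamental_theorem_of_algebra by blast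
  define q where "q = synthetic_div p z"
  have "[:-z, 1:] * q + [:poly p z:] = p" unfolding q_def by (rule synthetic_div_correct')
  then have pq: "p = smult (-z) q + pCons 0 q" using z by simp
  have dq: "degree q = m - 1" by (simp add: q_def degree_synthetic_div dp)
  have cqm: "coeff q m = 0" using dq m0 by (intro coeff_eq_0) simp
  have "coeff p m = coeff q (m - 1)"
  proof -
    have "coeff p m = - z * coeff q m + coeff (pCons 0 q) (Suc (m - 1))"
      using m0 by (subst pq) simp
    then show ?thesis using cqm by simp
  qed
  then have cq: "coeff q (m - 1) = 1" using cp by simp
  define E where "E N r = (\<Sum>i<N. coeff r i *s F i)" for N r
  have Ep: "E (Suc m) p = 0"
  proof -
    have "E (Suc m) p = (\<Sum>i<m. coeff p i *s F i) + coeff p m *s F m"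
      unfolding E_def by (rule sum.lessThan_Suc)
    also have "coeff p m = 1" by (simp add: cp)
    also have "(\<Sum>i<m. coeff p i *s F i) = (\<Sum>i<m. - (a i *s F i))"
      by (rule sum.cong) (auto simp: cp vec.scale_minus_left)
    also have "\<dots> = - (\<Sum>i<m. a i *s F i)"
      by (rule sum_negf)
    finally show ?thesis using a by simp
  qed
  have Eq: "E (Suc m) q = E m q"
  proof -
    have "E (Suc m) q = E m q + coeff q m *s F m"
      unfolding E_def by (rule sum.lessThan_Suc)
    then show ?thesis using cqm by simp
  qed
  have Esm: "E (Suc m) (smult (-z) q) = (-z) *s E m q"
  proof -
    have "E (Suc m) (smult (-z) q) = (\<Sum>i<Suc m. (-z) *s (coeff q i *s F i))"
      unfolding E_def coeff_smult by (rule sum.cong) (auto simp: vec.scale_scale)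
    also have "\<dots> = (-z) *s E (Suc m) q"
      unfolding E_def by (rule vec.scale_sum_right[symmetric])
    finally show ?thesis using Eq by simp
  qed
  have Epc: "E (Suc m) (pCons 0 q) = M *v E m q"
  proof -
    have "E (Suc m) (pCons 0 q) = coeff (pCons 0 q) 0 *s F 0 + (\<Sum>i<m. coeff (pCons 0 q) (Suc i) *s F (Suc i))"
      unfolding E_def by (rule sum.lessThan_Suc_shift)
    also have "\<dots> = (\<Sum>i<m. coeff q i *s (M *v F i))" by (simp add: FS)
    also have "\<dots> = (\<Sum>i<m. M *v (coeff q i *s F i))" by (simp add: vec.scale)
    also have "\<dots> = M *v E m q" unfolding E_def by (rule vec.sum[symmetric])
    finally show ?thesis .
  qed
  have Eadd: "E N (r1 + r2) = E N r1 + E N r2" for N r1 r2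
  proof -
    have "E N (r1 + r2) = (\<Sum>i<N. coeff r1 i *s F i + coeff r2 i *s F i)"
      unfolding E_def by (rule sum.cong) (auto simp: vec.scale_left_distrib)
    then show ?thesis unfolding E_def by (simp only: sum.distrib)
  qed
  have eig: "M *v E m q = z *s E m q"
  proof -
    have "E (Suc m) p = E (Suc m) (smult (-z) q) + E (Suc m) (pCons 0 q)"
      by (subst pq) (rule Eadd)
    then have h: "0 = - (z *s E m q) + M *v E m q" using Ep Esm Epc by (simp add: vec.scale_minus_left)
    have "M *v E m q = (- (z *s E m q) + M *v E m q) + z *s E m q" by (simp add: algebra_simps)
    also have "\<dots> = z *s E m q" unfolding h[symmetric] by simp
    finally show ?thesis .
  qed
  have uW: "E m q \<in> W" unfolding E_def
    by (intro vec.subspace_sum[OF sub] vec.subspace_scale[OF sub] FW)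
  obtain m' where m': "m = Suc m'" using m0 not0_implies_Suc by blast
  have u0: "E m q \<noteq> 0"
  proof
    assume u: "E m q = 0"
    have "E m q = (\<Sum>i<m'. coeff q i *s F i) + coeff q m' *s F m'"
      unfolding E_def m' by (rule sum.lessThan_Suc)
    then have "0 = (\<Sum>i<m'. coeff q i *s F i) + F m'" using u cq m' by simp
    then have "F m' = - (\<Sum>i<m'. coeff q i *s F i)"
      by (simp add: eq_neg_iff_add_eq_0 add.commute)
    also have "\<dots> = (\<Sum>i<m'. (- coeff q i) *s F i)"
      by (simp add: sum_negf[symmetric] vec.scale_minus_left)
    also have "\<dots> \<in> vec.span (F ` {..<m'})"
      by (intro vec.span_sum vec.span_scale vec.span_base) auto
    finally show False using mmin[of m'] m' by simp
  qed
  show ?thesis using uW u0 eig by blast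
qed

definition gfun :: "real \<Rightarrow> real \<Rightarrow> real \<Rightarrow> real" where
  "gfun c d s = max (c * s) (d * s)"

definition Pv :: "real^'n^'n \<Rightarrow> real^'n \<Rightarrow> nat \<Rightarrow> real^'n" where
  "Pv A b k = ((\<lambda>x. A *v x) ^^ k) b"

definition hsum :: "real^'n^'n \<Rightarrow> real^'n \<Rightarrow> real \<Rightarrow> real \<Rightarrow> nat \<Rightarrow> real^'n \<Rightarrow> real" where
  "hsum A b c d j w = (\<Sum>k<j. gfun c d (w \<bullet> Pv A b k))"

lemma hsum_Suc: "hsum A b c d (Suc j) w = gfun c d (w \<bullet> b) + hsum A b c d j (w v* A)"
proof -
  have "hsum A b c d (Suc j) w = gfun c d (w \<bullet> Pv A b 0) + (\<Sum>k<j. gfun c d (w \<bullet> Pv A b (Suc k)))"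
    unfolding hsum_def by (rule sum.lessThan_Suc_shift)
  also have "(\<Sum>k<j. gfun c d (w \<bullet> Pv A b (Suc k))) = hsum A b c d j (w v* A)"
    unfolding hsum_def by (rule sum.cong) (simp_all add: Pv_def dot_lmul_matrix)
  finally show ?thesis by (simp add: Pv_def)
qed

lemma traj_local: "(\<forall>i<j. u i = u' i) \<Longrightarrow> traj A b u j = traj A b u' j"
  by (induction j) auto

lemma gfun_ge: "c \<le> d \<Longrightarrow> x \<in> {c..d} \<Longrightarrow> x * s \<le> gfun c d s"
proof -
  assume "c \<le> d" "x \<in> {c..d}"
  then have "c \<le> x" "x \<le> d" by auto
  show ?thesis
  proof (cases "s \<ge> 0")
    case True
    then have "x * s \<le> d * s" using \<open>x \<le> d\<close> by (rule mult_right_mono[rotated])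
    then show ?thesis unfolding gfun_def by linarith
  next
    case False
    then have "x * s \<le> c * s" using \<open>c \<le> x\<close> by (intro mult_right_mono_neg) auto
    then show ?thesis unfolding gfun_def by linarith
  qed
qed

lemma gfun_eq: "c \<le> d \<Longrightarrow> gfun c d s = (if s \<ge> 0 then d else c) * s"
proof -
  assume cd: "c \<le> d"
  show ?thesis
  proof (cases "s \<ge> 0")
    case True
    then have "c * s \<le> d * s" using cd by (rule mult_right_mono[rotated])
    then show ?thesis using True unfolding gfun_def by simp
  next
    case False
    then have "d * s \<le> c * s" using cd by (intro mult_right_mono_neg) auto
    then show ?thesis using False unfolding gfun_def by simp
  qed
qed

lemma gfun_odd: "c \<le> d \<Longrightarrow> gfun c d s - gfun c d (-s) = (c + d) * s"
  by (simp add: gfun_eq algebra_simps)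

lemma traj_bound:
  assumes "c \<le> d" "\<forall>i. u i \<in> {c..d}"
  shows "w \<bullet> traj A b u j \<le> hsum A b c d j w"
proof (induction j arbitrary: w)
  case 0
  then show ?case by (simp add: hsum_def)
next
  case (Suc j)
  have "w \<bullet> traj A b u (Suc j) = (w v* A) \<bullet> traj A b u j + u j * (w \<bullet> b)"
    by (simp add: inner_add_right dot_lmul_matrix)
  also have "\<dots> \<le> hsum A b c d j (w v* A) + gfun c d (w \<bullet> b)"
    using Suc.IH[of "w v* A"] gfun_ge[OF assms(1) assms(2)[rule_format, of j], of "w \<bullet> b"] by linarith
  finally show ?case by (simp add: hsum_Suc)
qed

lemma traj_attain:
  assumes "c \<le> d"
  shows "\<exists>u. (\<forall>i. u i \<in> {c..d}) \<and> w \<bullet> traj A b u j = hsum A b c d j w"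
proof (induction j arbitrary: w)
  case 0
  show ?case by (rule exI[of _ "\<lambda>_. c"]) (simp add: hsum_def assms)
next
  case (Suc j)
  obtain u where u: "\<forall>i. u i \<in> {c..d}" "(w v* A) \<bullet> traj A b u j = hsum A b c d j (w v* A)"
    using Suc.IH by blast
  define u' where "u' = u(j := (if w \<bullet> b \<ge> 0 then d else c))"
  have u'r: "\<forall>i. u' i \<in> {c..d}" using u(1) assms by (auto simp: u'_def)
  have tj: "traj A b u' j = traj A b u j" by (rule traj_local) (simp add: u'_def)
  have "w \<bullet> traj A b u' (Suc j) = (w v* A) \<bullet> traj A b u j + u' j * (w \<bullet> b)"
    by (simp add: inner_add_right dot_lmul_matrix tj)
  also have "\<dots> = hsum A b c d (Suc j) w"
    using u(2) by (simp add: hsum_Suc u'_def gfun_eq[OF assms])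
  finally show ?case using u'r by blast
qed

lemma hsum_eq:
  assumes "c \<le> d" "\<forall>j. reach_set A b {c..d} j = reach_set A' b' {c..d} j"
  shows "hsum A b c d j w \<le> hsum A' b' c d j w"
proof -
  obtain u where u: "\<forall>i. u i \<in> {c..d}" "w \<bullet> traj A b u j = hsum A b c d j w"
    using traj_attain[OF assms(1)] by blast
  have "traj A b u j \<in> reach_set A b {c..d} j" using u(1) by (auto simp: reach_set_def)
  then have "traj A b u j \<in> reach_set A' b' {c..d} j" using assms(2) by simp
  then obtain u' where u': "\<forall>i. u' i \<in> {c..d}" "traj A b u j = traj A' b' u' j"
    by (auto simp: reach_set_def)
  show ?thesis using traj_bound[OF assms(1) u'(1), of w A' b' j] u(2) u'(2) by simp
qed

lemma Pv_eq:
  assumes "c < d" "c \<noteq> - d" "\<forall>j. reach_set A b {c..d} j = reach_set A' b' {c..d} j"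
  shows "Pv A b k = Pv A' b' k"
proof -
  have cd: "c \<le> d" using assms by simp
  have assms2: "\<forall>j. reach_set A' b' {c..d} j = reach_set A b {c..d} j" using assms(3) by simp
  have H: "hsum A b c d j w = hsum A' b' c d j w" for j w
    using hsum_eq[OF cd assms(3)] hsum_eq[OF cd assms2] by (meson antisym)
  have G: "gfun c d (w \<bullet> Pv A b k) = gfun c d (w \<bullet> Pv A' b' k)" for w
    using H[of "Suc k" w] H[of k w] by (simp add: hsum_def)
  have "(c + d) * (w \<bullet> Pv A b k) = (c + d) * (w \<bullet> Pv A' b' k)" for w
  proof -
    have g1: "gfun c d (w \<bullet> Pv A b k) = gfun c d (w \<bullet> Pv A' b' k)" by (rule G)
    have g2: "gfun c d (- (w \<bullet> Pv A b k)) = gfun c d (- (w \<bullet> Pv A' b' k))"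
      using G[of "-w"] by simp
    show ?thesis using g1 g2 gfun_odd[OF cd, of "w \<bullet> Pv A b k"] gfun_odd[OF cd, of "w \<bullet> Pv A' b' k"]
      by linarith
  qed
  then have I: "w \<bullet> Pv A b k = w \<bullet> Pv A' b' k" for w using assms(2) by simp
  have "(Pv A b k - Pv A' b' k) \<bullet> (Pv A b k - Pv A' b' k) = 0"
    using I[of "Pv A b k - Pv A' b' k"] by (simp add: inner_diff_right inner_commute)
  then show ?thesis by simp
qed

lemma key_swap:
  fixes A :: "real^'n^'n"
  shows "(\<Sum>j\<in>UNIV. cvec x $ j * (transpose (cmat A) *v \<eta>) $ j) = (\<Sum>j\<in>UNIV. cvec (A *v x) $ j * \<eta> $ j)"
proof -
  have "(\<Sum>j\<in>UNIV. cvec x $ j * (transpose (cmat A) *v \<eta>) $ j)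
      = (\<Sum>j\<in>UNIV. \<Sum>i\<in>UNIV. complex_of_real (x $ j) * complex_of_real (A $ i $ j) * \<eta> $ i)"
    by (simp add: matrix_vector_mult_def transpose_def cmat_def cvec_def sum_distrib_left mult.assoc)
  also have "\<dots> = (\<Sum>i\<in>UNIV. \<Sum>j\<in>UNIV. complex_of_real (x $ j) * complex_of_real (A $ i $ j) * \<eta> $ i)"
    by (rule sum.swap)
  also have "\<dots> = (\<Sum>i\<in>UNIV. cvec (A *v x) $ i * \<eta> $ i)"
    by (simp add: matrix_vector_mult_def cvec_def sum_distrib_right sum_distrib_left mult_ac)
  finally show ?thesis .
qed

lemma krylov_span:
  fixes A :: "real^'n^'n"
  assumes ctrl: "\<forall>\<eta>. left_eigenvector A \<eta> \<longrightarrow> (\<Sum>j\<in>UNIV. cvec b $ j * \<eta> $ j) \<noteq> 0"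
  shows "span (range (Pv A b)) = UNIV"
proof (rule ccontr)
  assume ns: "span (range (Pv A b)) \<noteq> UNIV"
  have "dim (range (Pv A b)) \<noteq> DIM(real^'n)" using ns dim_eq_full by blast
  then have dl: "dim (range (Pv A b)) < DIM(real^'n)" using dim_subset_UNIV[of "range (Pv A b)"] by linarith
  obtain w :: "real^'n" where w0: "w \<noteq> 0" and wo: "\<And>y. y \<in> span (range (Pv A b)) \<Longrightarrow> orthogonal w y"
    using orthogonal_to_subspace_exists[OF dl] by blast
  have wP: "w \<bullet> Pv A b k = 0" for k
    using wo[of "Pv A b k"] span_base[of "Pv A b k" "range (Pv A b)"] by (simp add: orthogonal_def)
  define W where "W = {\<eta>::complex^'n. \<forall>k. (\<Sum>j\<in>UNIV. cvec (Pv A b k) $ j * \<eta> $ j) = 0}"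
  have sub: "vec.subspace W"
    unfolding vec.subspace_def W_def
    by (simp add: distrib_left sum.distrib mult.left_commute[of _ "_ :: complex"] sum_distrib_left[symmetric])
  have inv: "transpose (cmat A) *v \<eta> \<in> W" if "\<eta> \<in> W" for \<eta>
  proof -
    have h: "A *v Pv A b k = Pv A b (Suc k)" for k by (simp add: Pv_def)
    have "(\<Sum>j\<in>UNIV. cvec (Pv A b k) $ j * (transpose (cmat A) *v \<eta>) $ j) = 0" for k
      unfolding key_swap h using that by (simp add: W_def)
    then show ?thesis unfolding W_def by blast
  qed
  have cw: "cvec w \<in> W"
  proof -
    have "(\<Sum>j\<in>UNIV. cvec (Pv A b k) $ j * cvec w $ j) = complex_of_real (Pv A b k \<bullet> w)" for k
      by (simp add: cvec_def inner_vec_def)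
    then show ?thesis unfolding W_def using wP by (simp add: inner_commute)
  qed
  have cw0: "cvec w \<noteq> 0"
  proof
    assume "cvec w = 0"
    then have "w $ i = 0" for i by (simp add: cvec_def vec_eq_iff)
    then show False using w0 by (simp add: vec_eq_iff)
  qed
  obtain \<eta> l where e: "\<eta> \<in> W" "\<eta> \<noteq> 0" "transpose (cmat A) *v \<eta> = l *s \<eta>"
    using eig_exists[OF sub inv cw cw0] by blast
  have "left_eigenvector A \<eta>" using e(2,3) unfolding left_eigenvector_def by auto
  then have "(\<Sum>j\<in>UNIV. cvec b $ j * \<eta> $ j) \<noteq> 0" using ctrl by blast
  moreover have "Pv A b 0 = b" by (simp add: Pv_def)
  moreover have "(\<Sum>j\<in>UNIV. cvec (Pv A b 0) $ j * \<eta> $ j) = 0" using e(1) unfolding W_def by blast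
  ultimately show False by simp
qed

theorem theorem2:
  fixes A A' :: "real^'n^'n" and b b' :: "real^'n" and c d :: real
  assumes "c < d" and "c \<noteq> - d"
    and "invertible A" and "invertible A'"
    and "card (eigenvalues A) = CARD('n)"
    and "card (eigenvalues A') = CARD('n)"
    and "\<forall>\<eta>. left_eigenvector A \<eta> \<longrightarrow> (\<Sum>j\<in>UNIV. cvec b $ j * \<eta> $ j) \<noteq> 0"
    and "\<forall>j. reach_set A b {c..d} j = reach_set A' b' {c..d} j"
  shows "A = A' \<and> b = b'"
proof -
  have P: "Pv A b k = Pv A' b' k" for k using Pv_eq[OF assms(1,2,8)] .
  have bb: "b = b'" using P[of 0] by (simp add: Pv_def)
  have AP: "A *v Pv A b k = A' *v Pv A b k" for k
  proof -
    have "A *v Pv A b k = Pv A b (Suc k)" by (simp add: Pv_def)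
    also have "\<dots> = Pv A' b' (Suc k)" by (rule P)
    also have "\<dots> = A' *v Pv A' b' k" by (simp add: Pv_def)
    finally show ?thesis using P[of k] by simp
  qed
  have subK: "subspace {x. A *v x = A' *v x}"
    by (simp add: subspace_def matrix_vector_right_distrib matrix_vector_mult_scaleR)
  have "span (range (Pv A b)) \<subseteq> {x. A *v x = A' *v x}"
    by (rule span_minimal) (use AP subK in auto)
  then have "\<forall>x. A *v x = A' *v x" using krylov_span[OF assms(7)] by auto
  then have "A = A'" by (simp add: matrix_eq)
  then show ?thesis using bb by simp
qed

end
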